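(* Let $K \geq 2$ be an integer and let $\Delta_K = \{\mathbf{p} = (\hat{p}_1,\dots,\hat{p}_K) \in [0,1]^K : \sum_{k=1}^K \hat{p}_k = 1\}$ be the probability simplex. Fix $\mathbf{y} = (\hat{y}_1,\dots,\hat{y}_K) \in \Delta_K$. Let $j \in \{1,\dots,K\}$ be an index with $\hat{y}_j = \max_{1 \leq k \leq K} \hat{y}_k$, and let $\mathbf{t} = (\hat{t}_1,\dots,\hat{t}_K) \in \{0,1\}^K$ be the simplex vertex with $\hat{t}_j = 1$ and $\hat{t}_k = 0$ for $k \neq j$. Then $$\sum_{k=1}^K \log\left(\hat{t}_k + \hat{y}_k\right) \;\leq\; \sum_{k=1}^K \log\left(\hat{p}_k + \hat{y}_k\right) \qquad \text{for all } \mathbf{p} = (\hat{p}_1,\dots,\hat{p}_K) \in \Delta_K,$$ i.e. the function $\mathbf{p} \mapsto \sum_{k=1}^K \log(\hat{p}_k + \hat{y}_k)$ attains its minimum over $\Delta_K$ at $\mathbf{t}$.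
   Context: Here $\log$ is the natural logarithm, with the convention $\log 0 = -\infty$ (values in the extended reals). In the paper's setting, $\hat{y}_k$ is the ground-truth proportion of pixels in segmentation region $k$ and $\hat{p}_k$ is the predicted (soft) proportion of class $k$; the quantity $\sum_k \log(\hat{p}_k + \hat{y}_k)$ is the label-marginal term arising in the decomposition of the multi-class logarithmic Dice loss. *)

theory Defs
  imports "HOL-Analysis.Analysis"
begin

text \<open>Natural logarithm into the extended reals, with log 0 = -infinity.
  (Arguments are never negative in the statement.)\<close>
definition elog :: "real \<Rightarrow> ereal" where
  "elog x = (if x > 0 then ereal (ln x) else -\<infinity>)"

definition prob_simplex :: "nat \<Rightarrow> (nat \<Rightarrow> real) set" where
  "prob_simplex K = {p. (\<forall>k\<in>{1..K}. 0 \<le> p k \<and> p k \<le> 1) \<and> (\<Sum>k=1..K. p k) = 1}"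

end

theory Submission
  imports Defs
begin

lemma chord_ln:
  fixes a y :: real
  assumes "0 \<le> a" "a \<le> 1" "0 < y"
  shows "ln y + a * (ln (1 + y) - ln y) \<le> ln (a + y)"
proof -
  have "(1 - a) * ln y + a * ln (1 + y) \<le> ln ((1 - a) * y + a * (1 + y))"
    using assms ln_concave unfolding concave_on_iff
    by (metis (no_types) add.commute diff_add_cancel diff_ge_0_iff_ge greaterThan_iff
        less_add_same_cancel2 less_trans real_scaleR_def zero_less_one)
  moreover have "(1 - a) * y + a * (1 + y) = a + y" by (simp add: algebra_simps)
  ultimately show ?thesis by (simp add: algebra_simps)
qed

lemma diff_mono_y:
  fixes u v :: real
  assumes "0 < u" "u \<le> v"
  shows "ln (1 + v) - ln v \<le> ln (1 + u) - ln u"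
proof -
  have "ln (1 + v) - ln v = ln ((1 + v) / v)" using assms by (simp add: ln_div)
  also have "\<dots> \<le> ln ((1 + u) / u)"
    using assms by (subst ln_le_cancel_iff) (auto simp: field_simps)
  also have "\<dots> = ln (1 + u) - ln u" using assms by (simp add: ln_div)
  finally show ?thesis .
qed

theorem proposition1:
  fixes K j :: nat and y t :: "nat \<Rightarrow> real"
  assumes "K \<ge> 2"
    and "y \<in> prob_simplex K"
    and "j \<in> {1..K}"
    and "\<forall>k\<in>{1..K}. y k \<le> y j"
    and "\<forall>k\<in>{1..K}. t k = (if k = j then 1 else 0)"
  shows "\<forall>p \<in> prob_simplex K.
           (\<Sum>k=1..K. elog (t k + y k)) \<le> (\<Sum>k=1..K. elog (p k + y k))"
proof
  fix p assume p: "p \<in> prob_simplex K"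
  have y0: "\<And>k. k \<in> {1..K} \<Longrightarrow> 0 \<le> y k" and ysum: "(\<Sum>k=1..K. y k) = 1"
    using assms(2) by (auto simp: prob_simplex_def)
  have p0: "\<And>k. k \<in> {1..K} \<Longrightarrow> 0 \<le> p k \<and> p k \<le> 1" and psum: "(\<Sum>k=1..K. p k) = 1"
    using p by (auto simp: prob_simplex_def)
  have yjpos: "0 < y j"
  proof (rule ccontr)
    assume "\<not> 0 < y j"
    hence "\<forall>k\<in>{1..K}. y k = 0" using assms(4) y0 by force
    hence "(\<Sum>k=1..K. y k) = 0" by simp
    with ysum show False by simp
  qed
  show "(\<Sum>k=1..K. elog (t k + y k)) \<le> (\<Sum>k=1..K. elog (p k + y k))"
  proof (cases "\<exists>k\<in>{1..K}. y k = 0")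
    case True
    then obtain k where k: "k \<in> {1..K}" "y k = 0" by blast
    with yjpos have "k \<noteq> j" by auto
    with k assms(5) have tk: "elog (t k + y k) = -\<infinity>" by (simp add: elog_def)
    have ninf: "(\<Sum>i\<in>{1..K} - {k}. elog (t i + y i)) \<noteq> \<infinity>"
      by (subst sum_Pinfty) (auto simp: elog_def)
    have "(\<Sum>i=1..K. elog (t i + y i)) = elog (t k + y k) + (\<Sum>i\<in>{1..K} - {k}. elog (t i + y i))"
      using k by (simp add: sum.remove)
    also have "\<dots> = -\<infinity>" using tk ninf by simp
    finally show ?thesis by simp
  next
    case False
    hence ypos: "\<And>k. k \<in> {1..K} \<Longrightarrow> 0 < y k" using y0 by force
    have tpos: "\<And>k. k \<in> {1..K} \<Longrightarrow> 0 < t k + y k" using ypos assms(5) by (smt (verit))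
    have ppos: "\<And>k. k \<in> {1..K} \<Longrightarrow> 0 < p k + y k" using ypos p0
      by (smt (verit))
    have L: "(\<Sum>k=1..K. elog (t k + y k)) = ereal (\<Sum>k=1..K. ln (t k + y k))"
      using tpos by (simp add: elog_def)
    have R: "(\<Sum>k=1..K. elog (p k + y k)) = ereal (\<Sum>k=1..K. ln (p k + y k))"
      using ppos by (simp add: elog_def)
    define D where "D k = ln (1 + y k) - ln (y k)" for k
    have Lr: "(\<Sum>k=1..K. ln (t k + y k)) = (\<Sum>k=1..K. ln (y k) + t k * D k)"
      using assms(5) by (intro sum.cong) (auto simp: D_def)
    also have "\<dots> = (\<Sum>k=1..K. ln (y k)) + D j"
    proof -
      have "(\<Sum>k=1..K. t k * D k) = (\<Sum>k=1..K. if k = j then D j else 0)"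
        using assms(5) by (intro sum.cong) auto
      also have "\<dots> = D j" using assms(3) by simp
      finally show ?thesis by (simp add: sum.distrib)
    qed
    finally have Lr2: "(\<Sum>k=1..K. ln (t k + y k)) = (\<Sum>k=1..K. ln (y k)) + D j" .
    have "(\<Sum>k=1..K. ln (y k)) + D j = (\<Sum>k=1..K. ln (y k)) + (\<Sum>k=1..K. p k * D j)"
      using psum by (simp add: sum_distrib_right[symmetric])
    also have "\<dots> \<le> (\<Sum>k=1..K. ln (y k)) + (\<Sum>k=1..K. p k * D k)"
      using p0 ypos assms(4) by (intro add_left_mono sum_mono mult_left_mono)
        (auto simp: D_def intro!: diff_mono_y)
    also have "\<dots> = (\<Sum>k=1..K. ln (y k) + p k * D k)" by (simp add: sum.distrib)
    also have "\<dots> \<le> (\<Sum>k=1..K. ln (p k + y k))"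
      using p0 ypos by (intro sum_mono) (auto simp: D_def intro!: chord_ln)
    finally show ?thesis using L R Lr2 by simp
  qed
qed

end
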